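(* Let $m<-n$. (1) For every $\rho\in\mathbb S^m(\mathbb R^n;\mathscr A_\theta)$, the operator $P_\rho$ is trace-class on $\mathcal H_\theta$. (2) The map $\rho\mapsto P_\rho$ is a continuous linear map from $\mathbb S^m(\mathbb R^n;\mathscr A_\theta)$ to the trace class $\mathscr L^1$ (with the trace norm). (3) For every $\rho\in\mathbb S^m(\mathbb R^n;\mathscr A_\theta)$, $$\operatorname{Trace}(P_\rho)=\sum_{k\in\mathbb Z^n}\tau\big[\rho(k)\big].$$
   Context: Fix $n\ge 2$ and a real antisymmetric $n\times n$ matrix $\theta$. The noncommutative torus $A_\theta$ is the $C^*$-algebra generated by unitaries $U_1,\dots,U_n$ with $U_kU_j=e^{2i\pi\theta_{jk}}U_jU_k$; $U^k=U_1^{k_1}\cdots U_n^{k_n}$; $\|\cdot\|$ is the $C^*$-norm; $\tau$ is the continuous trace on $A_\theta$ with $\tau(U^0)=1$, $\tau(U^k)=0$ for $k\neq0$. $\mathcal H_\theta$ is the Hilbert space completion of $A_\theta$ for $(u,v)=\tau(uv^* )$, with orthonormal basis $(U^k)_{k\in\mathbb Z^n}$. $\mathbb R^n$ acts by $*$-automorphisms $\alpha_s$ with $\alpha_s(U^k)=e^{is\cdot k}U^k$; $\mathscr A_\theta$ is the Fréchet algebra of smooth elements (the sums $\sum u_kU^k$ with $(u_k)$ rapidly decreasing; seminorms $u\mapsto\|\delta^\alpha u\|$ with $\delta_j(U^k)=k_jU^k$). $\mathbb S^m(\mathbb R^n;\mathscr A_\theta)$ is the Fréchet space of smooth $\rho:\mathbb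 R^n\to\mathscr A_\theta$ with $\|\delta^\alpha\partial_\xi^\beta\rho(\xi)\|\le C_{\alpha\beta}(1+|\xi|)^{m-|\beta|}$ (seminorms given by the best constants). $P_\rho$ is the pseudodifferential operator $P_\rho u=\iint e^{is\cdot\xi}\rho(\xi)\alpha_{-s}(u)\,ds\,(2\pi)^{-n}d\xi$ (oscillating integral), i.e. $P_\rho(\sum u_kU^k)=\sum u_k\rho(k)U^k$; for $m\le0$ it extends to a bounded operator on $\mathcal H_\theta$. *)

theory Defs
  imports "HOL-Analysis.Analysis"
begin

text \<open>Elements of the noncommutative torus are represented by their Fourier coefficients
  u :: int^'n => complex, i.e. u = sum_k u k U^k. The index type 'n (with its linear order)
  plays the role of {1..n}.\<close>

type_synonym 'n coef = "(int, 'n) vec \<Rightarrow> complex"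

definition rvec :: "(int, 'n::finite) vec \<Rightarrow> (real, 'n) vec" where
  "rvec k = (\<chi> i. real_of_int (k$i))"

text \<open>Phase: U^j U^k = phase theta j k * U^(j+k), computed from U_b U_a = e^(2 i pi theta_ab) U_a U_b.\<close>
definition phase :: "((real, 'n::{finite,linorder}) vec, 'n) vec \<Rightarrow> (int, 'n) vec \<Rightarrow> (int, 'n) vec \<Rightarrow> complex" where
  "phase \<theta> j k = cis (2 * pi * (\<Sum>a\<in>UNIV. \<Sum>b\<in>{b. a < b}.
       \<theta>$a$b * real_of_int (k$a) * real_of_int (j$b)))"

text \<open>Product in A_theta on coefficients (twisted convolution).\<close>
definition tmult :: "((real, 'n::{finite,linorder}) vec, 'n) vec \<Rightarrow> 'n coef \<Rightarrow> 'n coef \<Rightarrow> 'n coef" where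
  "tmult \<theta> u v = (\<lambda>l. \<Sum>\<^sub>\<infinity>j. u j * v (l - j) * phase \<theta> j (l - j))"

definition tau :: "'n::finite coef \<Rightarrow> complex" where
  "tau u = u 0"

text \<open>The Hilbert space H_theta, identified with l^2(Z^n) via the orthonormal basis U^k.\<close>
definition l2 :: "'n::finite coef \<Rightarrow> bool" where
  "l2 v \<longleftrightarrow> (\<lambda>k. (cmod (v k))^2) summable_on UNIV"

definition l2norm :: "'n::finite coef \<Rightarrow> real" where
  "l2norm v = sqrt (\<Sum>\<^sub>\<infinity>k. (cmod (v k))^2)"

definition l2inner :: "'n::finite coef \<Rightarrow> 'n coef \<Rightarrow> complex" where
  "l2inner u v = (\<Sum>\<^sub>\<infinity>k. u k * cnj (v k))"

definition basisv :: "(int, 'n::finite) vec \<Rightarrow> 'n coef" where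
  "basisv k = (\<lambda>j. if j = k then 1 else 0)"

text \<open>C*-norm: norm of left multiplication on H_theta (faithful GNS representation of tau).\<close>
definition cnorm :: "((real, 'n::{finite,linorder}) vec, 'n) vec \<Rightarrow> 'n coef \<Rightarrow> real" where
  "cnorm \<theta> u = Sup {l2norm (tmult \<theta> u v) | v. l2 v \<and> l2norm v \<le> 1}"

definition mdelta :: "('n::finite \<Rightarrow> nat) \<Rightarrow> 'n coef \<Rightarrow> 'n coef" where
  "mdelta \<alpha> u = (\<lambda>k. (\<Prod>l\<in>UNIV. of_int (k$l) ^ \<alpha> l) * u k)"

definition smooth_elem :: "'n::finite coef \<Rightarrow> bool" where
  "smooth_elem u \<longleftrightarrow> (\<forall>N::nat. \<exists>C. \<forall>k. (1 + norm (rvec k)) ^ N * cmod (u k) \<le> C)"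

text \<open>Partial derivative and continuity for maps R^n -> smooth elements (Frechet topology
  given by the seminorms u |-> ||delta^alpha u||).\<close>
definition ahas_partial :: "((real, 'n::{finite,linorder}) vec, 'n) vec \<Rightarrow> ((real, 'n) vec \<Rightarrow> 'n coef) \<Rightarrow> 'n
     \<Rightarrow> ((real, 'n) vec \<Rightarrow> 'n coef) \<Rightarrow> (real, 'n) vec \<Rightarrow> bool" where
  "ahas_partial \<theta> f l g \<xi> \<longleftrightarrow> (\<forall>\<alpha>. ((\<lambda>t. cnorm \<theta> (mdelta \<alpha>
       (\<lambda>k. (f (\<xi> + t *\<^sub>R axis l 1) k - f \<xi> k) / complex_of_real t - g \<xi> k))) \<longlongrightarrow> 0) (at 0))"

definition acont :: "((real, 'n::{finite,linorder}) vec, 'n) vec \<Rightarrow> ((real, 'n) vec \<Rightarrow> 'n coef) \<Rightarrow> (real, 'n) vec \<Rightarrow> bool" where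
  "acont \<theta> f \<xi> \<longleftrightarrow> (\<forall>\<alpha>. ((\<lambda>\<eta>. cnorm \<theta> (mdelta \<alpha> (\<lambda>k. f \<eta> k - f \<xi> k))) \<longlongrightarrow> 0) (at \<xi>))"

text \<open>D is the family of all iterated partial derivatives (D beta = partial^beta rho) of a smooth
  map rho : R^n -> A_theta-smooth.\<close>
definition deriv_family :: "((real, 'n::{finite,linorder}) vec, 'n) vec \<Rightarrow> ((real, 'n) vec \<Rightarrow> 'n coef)
     \<Rightarrow> (('n \<Rightarrow> nat) \<Rightarrow> (real, 'n) vec \<Rightarrow> 'n coef) \<Rightarrow> bool" where
  "deriv_family \<theta> \<rho> D \<longleftrightarrow> D (\<lambda>_. 0) = \<rho> \<and>
     (\<forall>\<beta> \<xi>. smooth_elem (D \<beta> \<xi>) \<and> acont \<theta> (D \<beta>) \<xi>) \<and>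
     (\<forall>\<beta> l \<xi>. ahas_partial \<theta> (D \<beta>) l (D (\<beta>(l := Suc (\<beta> l)))) \<xi>)"

definition sderiv :: "((real, 'n::{finite,linorder}) vec, 'n) vec \<Rightarrow> ((real, 'n) vec \<Rightarrow> 'n coef) \<Rightarrow> ('n \<Rightarrow> nat) \<Rightarrow> (real, 'n) vec \<Rightarrow> 'n coef" where
  "sderiv \<theta> \<rho> = (SOME D. deriv_family \<theta> \<rho> D)"

definition symbol_class :: "((real, 'n::{finite,linorder}) vec, 'n) vec \<Rightarrow> real \<Rightarrow> ((real, 'n) vec \<Rightarrow> 'n coef) set" where
  "symbol_class \<theta> m = {\<rho>. \<exists>D. deriv_family \<theta> \<rho> D \<and>
     (\<forall>\<alpha> \<beta>. \<exists>C. \<forall>\<xi>. cnorm \<theta> (mdelta \<alpha> (D \<beta> \<xi>))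
        \<le> C * (1 + norm \<xi>) powr (m - real (sum \<beta> UNIV)))}"

definition sym_seminorm :: "((real, 'n::{finite,linorder}) vec, 'n) vec \<Rightarrow> real \<Rightarrow> ('n \<Rightarrow> nat) \<Rightarrow> ('n \<Rightarrow> nat)
     \<Rightarrow> ((real, 'n) vec \<Rightarrow> 'n coef) \<Rightarrow> real" where
  "sym_seminorm \<theta> m \<alpha> \<beta> \<rho> = (SUP \<xi>. cnorm \<theta> (mdelta \<alpha> (sderiv \<theta> \<rho> \<beta> \<xi>))
        / (1 + norm \<xi>) powr (m - real (sum \<beta> UNIV)))"

text \<open>The pseudodifferential operator P_rho on H_theta: P_rho(sum v_k U^k) = sum v_k rho(k) U^k.\<close>
definition psido :: "((real, 'n::{finite,linorder}) vec, 'n) vec \<Rightarrow> ((real, 'n) vec \<Rightarrow> 'n coef) \<Rightarrow> 'n coef \<Rightarrow> 'n coef" where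
  "psido \<theta> \<rho> v = (\<lambda>l. \<Sum>\<^sub>\<infinity>k. v k * \<rho> (rvec k) (l - k) * phase \<theta> (l - k) k)"

definition l2_linear :: "('n::finite coef \<Rightarrow> 'n coef) \<Rightarrow> bool" where
  "l2_linear T \<longleftrightarrow> (\<forall>v. l2 v \<longrightarrow> l2 (T v)) \<and>
     (\<forall>u v a b. l2 u \<longrightarrow> l2 v \<longrightarrow> T (\<lambda>k. a * u k + b * v k) = (\<lambda>k. a * T u k + b * T v k))"

definition orthonormal_sys :: "(nat \<Rightarrow> 'n::finite coef) \<Rightarrow> nat \<Rightarrow> bool" where
  "orthonormal_sys e N \<longleftrightarrow> (\<forall>i<N. l2 (e i) \<and> (\<forall>j<N. l2inner (e i) (e j) = (if i = j then 1 else 0)))"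

definition trace_sums :: "('n::finite coef \<Rightarrow> 'n coef) \<Rightarrow> real set" where
  "trace_sums T = {\<Sum>i<N. cmod (l2inner (T (e i)) (f i)) | N e f.
       orthonormal_sys e N \<and> orthonormal_sys f N}"

definition trace_class :: "('n::finite coef \<Rightarrow> 'n coef) \<Rightarrow> bool" where
  "trace_class T \<longleftrightarrow> l2_linear T \<and> bdd_above (trace_sums T)"

definition trace_norm :: "('n::finite coef \<Rightarrow> 'n coef) \<Rightarrow> real" where
  "trace_norm T = Sup (trace_sums T)"

definition op_trace :: "('n::finite coef \<Rightarrow> 'n coef) \<Rightarrow> complex" where
  "op_trace T = (\<Sum>\<^sub>\<infinity>k. l2inner (T (basisv k)) (basisv k))"

end

theory Submission
  imports Defs
begin


lemma phase_0[simp]: "phase \<theta> 0 k = 1"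
  by (simp add: phase_def)

lemma norm_phase[simp]: "cmod (phase \<theta> j k) = 1"
  by (simp add: phase_def)

lemma nat_powr_summable:
  assumes "s < -1"
  shows "(\<lambda>n::nat. (1 + real n) powr s) summable_on UNIV"
proof -
  have "summable (\<lambda>n::nat. real n powr s)" using assms summable_real_powr_iff by blast
  then have "summable (\<lambda>n::nat. real (Suc n) powr s)" by (subst summable_Suc_iff)
  then have "summable (\<lambda>n::nat. (1 + real n) powr s)" by (simp add: add.commute)
  then show ?thesis by (subst summable_on_UNIV_nonneg_real_iff) auto
qed

lemma int_powr_summable:
  assumes "s < -1"
  shows "(\<lambda>j::int. (1 + \<bar>real_of_int j\<bar>) powr s) summable_on UNIV"
proof -
  let ?f = "\<lambda>j::int. (1 + \<bar>real_of_int j\<bar>) powr s"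
  have U: "(UNIV::int set) = range int \<union> range (\<lambda>n. - int n - 1)"
  proof (intro set_eqI iffI)
    fix j :: int assume "j \<in> UNIV"
    show "j \<in> range int \<union> range (\<lambda>n. - int n - 1)"
    proof (cases "j \<ge> 0")
      case True then show ?thesis by (metis UnI1 nonneg_int_cases rangeI)
    next
      case False then have "j = - int (nat (- j - 1)) - 1" by simp
      then show ?thesis by (metis UnI2 rangeI)
    qed
  qed auto
  have a: "?f summable_on range int"
    using nat_powr_summable[OF assms] by (subst summable_on_reindex) (auto simp: o_def)
  have b0: "(\<lambda>n::nat. (1 + real n) powr s) summable_on UNIV" by (rule nat_powr_summable[OF assms])
  have b1: "(\<lambda>n::nat. (1 + real (Suc n)) powr s) \<le> (\<lambda>n::nat. (1 + real n) powr s)"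
    using assms by (auto intro!: le_funI powr_mono2')
  have b2: "(\<lambda>n::nat. (1 + real (Suc n)) powr s) summable_on UNIV"
    by (rule summable_on_comparison_test[OF b0]) (use b1 in \<open>auto simp: le_fun_def\<close>)
  have b: "?f summable_on range (\<lambda>n. - int n - 1)"
  proof (subst summable_on_reindex)
    show "inj_on (\<lambda>n. - int n - 1) UNIV" by (auto simp: inj_on_def)
    have "(?f \<circ> (\<lambda>n. - int n - 1)) = (\<lambda>n::nat. (1 + real (Suc n)) powr s)"
      by (auto simp: o_def)
    then show "(?f \<circ> (\<lambda>n. - int n - 1)) summable_on UNIV" using b2 by simp
  qed
  have "?f summable_on (range int \<union> range (\<lambda>n. - int n - 1))"
    by (rule summable_on_union[OF a b])
  then show ?thesis using U by simp
qed



lemma vec_powr_summable: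
  fixes \<phi> :: "int \<Rightarrow> real"
  assumes nn: "\<And>j. \<phi> j \<ge> 0" and sm: "\<phi> summable_on UNIV"
  shows "(\<lambda>k::(int,'n::finite) vec. \<Prod>i\<in>UNIV. \<phi> (k$i)) summable_on UNIV"
proof (rule nonneg_bdd_above_summable_on)
  show "\<And>x. x \<in> UNIV \<Longrightarrow> 0 \<le> (\<Prod>i\<in>UNIV. \<phi> (x $ i))" using nn by (simp add: prod_nonneg)
  let ?\<Phi> = "infsum \<phi> UNIV"
  show "bdd_above (sum (\<lambda>k::(int,'n) vec. \<Prod>i\<in>UNIV. \<phi> (k$i)) ` {F. F \<subseteq> UNIV \<and> finite F})"
  proof (rule bdd_aboveI2)
    fix F :: "(int,'n) vec set" assume "F \<in> {F. F \<subseteq> UNIV \<and> finite F}"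
    then have fF: "finite F" by simp
    define P where "P i = (\<lambda>k. k$i) ` F" for i
    have fP: "finite (P i)" for i using fF by (simp add: P_def)
    have "(\<Sum>k\<in>F. \<Prod>i\<in>UNIV. \<phi> (k$i)) = (\<Sum>g\<in>vec_nth ` F. \<Prod>i\<in>UNIV. \<phi> (g i))"
      by (subst sum.reindex) (auto simp: inj_on_def vec_eq_iff fun_eq_iff)
    also have "\<dots> \<le> (\<Sum>g\<in>PiE UNIV P. \<Prod>i\<in>UNIV. \<phi> (g i))"
    proof (rule sum_mono2)
      show "finite (PiE UNIV P)" using fP by (simp add: finite_PiE)
      show "vec_nth ` F \<subseteq> PiE UNIV P" by (auto simp: P_def PiE_def Pi_def)
      show "\<And>b. b \<in> PiE UNIV P - vec_nth ` F \<Longrightarrow> 0 \<le> (\<Prod>i\<in>UNIV. \<phi> (b i))"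
        using nn by (simp add: prod_nonneg)
    qed
    also have "\<dots> = (\<Prod>i\<in>UNIV. \<Sum>j\<in>P i. \<phi> j)"
      by (rule prod_sum_PiE[symmetric]) (auto simp: fP)
    also have "\<dots> \<le> (\<Prod>i\<in>(UNIV::'n set). ?\<Phi>)"
    proof (rule prod_mono)
      fix i :: 'n
      show "0 \<le> (\<Sum>j\<in>P i. \<phi> j) \<and> (\<Sum>j\<in>P i. \<phi> j) \<le> ?\<Phi>"
        using nn fP by (auto intro!: sum_nonneg finite_sum_le_infsum sm)
    qed
    finally show "(\<Sum>k\<in>F. \<Prod>i\<in>UNIV. \<phi> (k$i)) \<le> (\<Prod>i\<in>(UNIV::'n set). ?\<Phi>)" .
  qed
qed

lemma norm_rvec_ge: "\<bar>real_of_int (k$i)\<bar> \<le> norm (rvec k)"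
proof -
  have "\<bar>rvec k $ i\<bar> \<le> norm (rvec k)" by (rule component_le_norm_cart)
  then show ?thesis by (simp add: rvec_def)
qed

lemma weight_summable:
  assumes m: "m < - real CARD('n::finite)"
  shows "(\<lambda>k::(int,'n) vec. (1 + norm (rvec k)) powr m) summable_on UNIV"
proof -
  define n where "n = real CARD('n)"
  have n0: "n > 0" by (simp add: n_def)
  define s where "s = m / n"
  have s: "s < -1" using m n0 by (simp add: s_def n_def divide_less_eq)
  have sm: "(\<lambda>k::(int,'n) vec. \<Prod>i\<in>UNIV. (1 + \<bar>real_of_int (k$i)\<bar>) powr s) summable_on UNIV"
    by (rule vec_powr_summable) (auto intro: int_powr_summable[OF s])
  show ?thesis
  proof (rule summable_on_comparison_test[OF sm])
    fix k :: "(int,'n) vec"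
    show "0 \<le> (1 + norm (rvec k)) powr m" by simp
    have "(\<Prod>i\<in>UNIV. (1 + \<bar>real_of_int (k$i)\<bar>)) \<le> (\<Prod>i\<in>(UNIV::'n set). 1 + norm (rvec k))"
      by (rule prod_mono) (auto intro: norm_rvec_ge)
    also have "\<dots> = (1 + norm (rvec k)) powr n"
      using powr_realpow[of "1 + norm (rvec k)" "CARD('n)"] by (simp add: n_def add_pos_nonneg)
    finally have le: "(\<Prod>i\<in>UNIV. (1 + \<bar>real_of_int (k$i)\<bar>)) \<le> (1 + norm (rvec k)) powr n" .
    have pos: "0 < (\<Prod>i\<in>UNIV. (1 + \<bar>real_of_int (k$i)\<bar>))" by (intro prod_pos) auto
    have "(1 + norm (rvec k)) powr m = ((1 + norm (rvec k)) powr n) powr s"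
      using n0 by (simp add: powr_powr s_def)
    also have "\<dots> \<le> (\<Prod>i\<in>UNIV. (1 + \<bar>real_of_int (k$i)\<bar>)) powr s"
      by (rule powr_mono2') (use s pos le in auto)
    also have "\<dots> = (\<Prod>i\<in>UNIV. (1 + \<bar>real_of_int (k$i)\<bar>) powr s)"
      by (rule prod_powr_distrib)
    finally show "(1 + norm (rvec k)) powr m \<le> (\<Prod>i\<in>UNIV. (1 + \<bar>real_of_int (k$i)\<bar>) powr s)" .
  qed
qed



lemma has_sum_finsum:
  fixes f :: "'i \<Rightarrow> 'a \<Rightarrow> 'b::topological_comm_monoid_add"
  assumes "finite I" "\<And>i. i \<in> I \<Longrightarrow> (f i has_sum s i) A"
  shows "((\<lambda>x. \<Sum>i\<in>I. f i x) has_sum (\<Sum>i\<in>I. s i)) A"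
  using assms by (induction I rule: finite_induct) (auto intro!: has_sum_add)

lemma infsum_finsum:
  fixes f :: "'i \<Rightarrow> 'a \<Rightarrow> 'b::{topological_comm_monoid_add,t2_space}"
  assumes "finite I" "\<And>i. i \<in> I \<Longrightarrow> f i summable_on A"
  shows "(\<lambda>x. \<Sum>i\<in>I. f i x) summable_on A" "infsum (\<lambda>x. \<Sum>i\<in>I. f i x) A = (\<Sum>i\<in>I. infsum (f i) A)"
proof -
  have "((\<lambda>x. \<Sum>i\<in>I. f i x) has_sum (\<Sum>i\<in>I. infsum (f i) A)) A"
    by (rule has_sum_finsum) (use assms in auto)
  then show "(\<lambda>x. \<Sum>i\<in>I. f i x) summable_on A" "infsum (\<lambda>x. \<Sum>i\<in>I. f i x) A = (\<Sum>i\<in>I. infsum (f i) A)"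
    by (auto simp: has_sum_iff)
qed

lemma nonneg_summable_bound:
  fixes f :: "'a \<Rightarrow> real"
  assumes "\<And>x. f x \<ge> 0" "\<And>F. finite F \<Longrightarrow> sum f F \<le> B"
  shows "f summable_on UNIV" "infsum f UNIV \<le> B"
proof -
  show s: "f summable_on UNIV"
    by (rule nonneg_bdd_above_summable_on) (use assms in \<open>auto intro!: bdd_aboveI2\<close>)
  show "infsum f UNIV \<le> B" by (rule infsum_le_finite_sums[OF s]) (use assms in auto)
qed

lemma finite_cs:
  fixes a x :: "'a \<Rightarrow> real"
  assumes "\<And>j. a j \<ge> 0"
  shows "(\<Sum>j\<in>F. a j * \<bar>x j\<bar>)^2 \<le> (\<Sum>j\<in>F. a j) * (\<Sum>j\<in>F. a j * (x j)^2)"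
proof -
  have "(\<Sum>j\<in>F. a j * \<bar>x j\<bar>) = (\<Sum>j\<in>F. \<bar>sqrt (a j)\<bar> * \<bar>sqrt (a j) * x j\<bar>)"
    using assms by (intro sum.cong) (auto simp: abs_mult real_sqrt_mult[symmetric] )
  also have "\<dots> \<le> L2_set (\<lambda>j. sqrt (a j)) F * L2_set (\<lambda>j. sqrt (a j) * x j) F"
    by (rule L2_set_mult_ineq)
  finally have le: "(\<Sum>j\<in>F. a j * \<bar>x j\<bar>) \<le> L2_set (\<lambda>j. sqrt (a j)) F * L2_set (\<lambda>j. sqrt (a j) * x j) F" .
  have nn: "0 \<le> (\<Sum>j\<in>F. a j * \<bar>x j\<bar>)" using assms by (auto intro!: sum_nonneg)
  have "(\<Sum>j\<in>F. a j * \<bar>x j\<bar>)^2 \<le> (L2_set (\<lambda>j. sqrt (a j)) F * L2_set (\<lambda>j. sqrt (a j) * x j) F)^2"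
    using le nn by (intro power_mono) auto
  also have "\<dots> = (L2_set (\<lambda>j. sqrt (a j)) F)^2 * (L2_set (\<lambda>j. sqrt (a j) * x j) F)^2"
    by (simp add: power_mult_distrib)
  also have "\<dots> = (\<Sum>j\<in>F. a j) * (\<Sum>j\<in>F. a j * (x j)^2)"
    using assms by (simp add: L2_set_def sum_nonneg power_mult_distrib)
  finally show ?thesis .
qed

lemma weighted_cs:
  fixes a x :: "'a \<Rightarrow> real"
  assumes a0: "\<And>j. a j \<ge> 0" and sa: "a summable_on UNIV"
    and sx: "(\<lambda>j. a j * (x j)^2) summable_on UNIV"
  shows "(\<lambda>j. a j * \<bar>x j\<bar>) summable_on UNIV"
    "(infsum (\<lambda>j. a j * \<bar>x j\<bar>) UNIV)^2 \<le> infsum a UNIV * infsum (\<lambda>j. a j * (x j)^2) UNIV"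
proof -
  have s2: "(\<lambda>j. (a j + a j * (x j)^2) * (1/2)) summable_on UNIV"
    using summable_on_add[OF sa sx] by (intro summable_on_cmult_left) auto
  show s: "(\<lambda>j. a j * \<bar>x j\<bar>) summable_on UNIV"
  proof (rule summable_on_comparison_test[OF s2])
    fix j
    have "\<bar>x j\<bar> \<le> (1 + (x j)^2) / 2"
      using sum_squares_bound[of 1 "\<bar>x j\<bar>"] by (simp add: power2_eq_square)
    then have "a j * \<bar>x j\<bar> \<le> a j * ((1 + (x j)^2) / 2)" using a0 by (intro mult_left_mono) auto
    then show "a j * \<bar>x j\<bar> \<le> (a j + a j * (x j)^2) * (1/2)" by (simp add: field_simps)
    show "0 \<le> a j * \<bar>x j\<bar>" using a0 by simp
  qed
  let ?A = "infsum a UNIV" and ?S = "infsum (\<lambda>j. a j * (x j)^2) UNIV"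
  have A0: "?A \<ge> 0" using a0 by (simp add: infsum_nonneg)
  have S0: "?S \<ge> 0" using a0 by (simp add: infsum_nonneg)
  have "infsum (\<lambda>j. a j * \<bar>x j\<bar>) UNIV \<le> sqrt (?A * ?S)"
  proof (rule infsum_le_finite_sums[OF s])
    fix F :: "'a set" assume "finite F"
    have "(\<Sum>j\<in>F. a j * \<bar>x j\<bar>)^2 \<le> (\<Sum>j\<in>F. a j) * (\<Sum>j\<in>F. a j * (x j)^2)"
      by (rule finite_cs[OF a0])
    also have "\<dots> \<le> ?A * ?S"
      using a0 \<open>finite F\<close> by (intro mult_mono finite_sum_le_infsum sa sx) (auto intro: sum_nonneg infsum_nonneg)
    finally show "(\<Sum>j\<in>F. a j * \<bar>x j\<bar>) \<le> sqrt (?A * ?S)"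
      by (metis abs_le_D1 real_sqrt_abs real_sqrt_le_iff)
  qed
  moreover have "0 \<le> infsum (\<lambda>j. a j * \<bar>x j\<bar>) UNIV" using a0 by (simp add: infsum_nonneg)
  ultimately have "(infsum (\<lambda>j. a j * \<bar>x j\<bar>) UNIV)^2 \<le> (sqrt (?A * ?S))^2"
    by (intro power_mono) auto
  then show "(infsum (\<lambda>j. a j * \<bar>x j\<bar>) UNIV)^2 \<le> ?A * ?S" using A0 S0 by simp
qed



lemma has_sum_diff':
  fixes f g :: "'a \<Rightarrow> 'b::topological_ab_group_add"
  assumes "(f has_sum a) A" "(g has_sum b) A"
  shows "((\<lambda>x. f x - g x) has_sum (a - b)) A"
proof -
  have "((\<lambda>x. - g x) has_sum (- b)) A" using assms(2) by (simp add: has_sum_uminus)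
  from has_sum_add[OF assms(1) this] show ?thesis by simp
qed

lemma l2norm_nonneg: "l2norm v \<ge> 0"
  by (simp add: l2norm_def infsum_nonneg)

lemma l2norm_sq: "(l2norm v)^2 = (\<Sum>\<^sub>\<infinity>k. (cmod (v k))^2)"
  by (simp add: l2norm_def infsum_nonneg)

lemma l2_coord_sq:
  assumes "l2 v" shows "(cmod (v k))^2 \<le> (l2norm v)^2"
proof -
  have "(\<Sum>j\<in>{k}. (cmod (v j))^2) \<le> (\<Sum>\<^sub>\<infinity>j. (cmod (v j))^2)"
    using assms unfolding l2_def by (intro finite_sum_le_infsum) auto
  then show ?thesis by (simp add: l2norm_sq)
qed

lemma l2_coord:
  assumes "l2 v" shows "cmod (v k) \<le> l2norm v"
  using l2_coord_sq[OF assms, of k] l2norm_nonneg[of v] by (simp add: power2_le_iff_abs_le)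

lemma l2_abs_prod:
  assumes "l2 u" "l2 v"
  shows "(\<lambda>k. cmod (u k) * cmod (v k)) summable_on UNIV"
proof (rule summable_on_comparison_test)
  show "(\<lambda>k. ((cmod (u k))^2 + (cmod (v k))^2) * (1/2)) summable_on UNIV"
    using assms unfolding l2_def by (intro summable_on_cmult_left summable_on_add)
  fix k
  show "cmod (u k) * cmod (v k) \<le> ((cmod (u k))^2 + (cmod (v k))^2) * (1/2)"
    using sum_squares_bound[of "cmod (u k)" "cmod (v k)"] by (simp add: power2_eq_square)
  show "0 \<le> cmod (u k) * cmod (v k)" by simp
qed

lemma l2_prod_summable:
  assumes "l2 u" "l2 v"
  shows "(\<lambda>k. u k * cnj (v k)) summable_on UNIV"
  by (rule abs_summable_summable) (use l2_abs_prod[OF assms] in \<open>simp add: norm_mult\<close>)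

lemma l2_has_inner:
  assumes "l2 u" "l2 v"
  shows "((\<lambda>k. u k * cnj (v k)) has_sum l2inner u v) UNIV"
  using l2_prod_summable[OF assms] by (simp add: l2inner_def has_sum_infsum)

lemma l2_has_norm:
  assumes "l2 x"
  shows "((\<lambda>k. x k * cnj (x k)) has_sum complex_of_real ((l2norm x)^2)) UNIV"
proof -
  have "((\<lambda>k. (cmod (x k))^2) has_sum (l2norm x)^2) UNIV"
    using assms by (simp add: l2_def l2norm_sq has_sum_infsum)
  from has_sum_of_real[OF this, where 'a=complex] show ?thesis
    by (simp only: complex_norm_square)
qed

lemma bessel:
  assumes x: "l2 x" and f: "orthonormal_sys f N"
  shows "(\<Sum>i<N. (cmod (l2inner x (f i)))^2) \<le> (l2norm x)^2"
proof -
  define c where "c i = l2inner x (f i)" for i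
  define s where "s k = (\<Sum>i<N. c i * f i k)" for k
  have fl2: "l2 (f i)" if "i < N" for i using f that by (simp add: orthonormal_sys_def)
  have hp: "((\<lambda>k. x k * cnj (f i k)) has_sum c i) UNIV" if "i < N" for i
    unfolding c_def by (rule l2_has_inner[OF x fl2[OF that]])
  have hq: "((\<lambda>k. f i k * cnj (f j k)) has_sum (if i = j then 1 else 0)) UNIV" if "i < N" "j < N" for i j
    using l2_has_inner[OF fl2[OF that(1)] fl2[OF that(2)]] f that by (simp add: orthonormal_sys_def)
  have h1: "((\<lambda>k. x k * cnj (x k)) has_sum complex_of_real ((l2norm x)^2)) UNIV"
    by (rule l2_has_norm[OF x])
  have h2: "((\<lambda>k. x k * cnj (s k)) has_sum (\<Sum>i<N. cnj (c i) * c i)) UNIV"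
  proof -
    have "((\<lambda>k. \<Sum>i<N. cnj (c i) * (x k * cnj (f i k))) has_sum (\<Sum>i<N. cnj (c i) * c i)) UNIV"
      by (intro has_sum_finsum has_sum_cmult_right hp) auto
    moreover have "(\<lambda>k. \<Sum>i<N. cnj (c i) * (x k * cnj (f i k))) = (\<lambda>k. x k * cnj (s k))"
      by (auto simp: s_def sum_distrib_left mult_ac)
    ultimately show ?thesis by simp
  qed
  have h3: "((\<lambda>k. s k * cnj (x k)) has_sum (\<Sum>i<N. c i * cnj (c i))) UNIV"
  proof -
    have "((\<lambda>k. cnj (x k * cnj (s k))) has_sum cnj (\<Sum>i<N. cnj (c i) * c i)) UNIV"
      by (rule has_sum_cnj_iff[THEN iffD2, OF h2])
    moreover have "cnj (\<Sum>i<N. cnj (c i) * c i) = (\<Sum>i<N. c i * cnj (c i))" by (simp add: mult.commute)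
    moreover have "(\<lambda>k. cnj (x k * cnj (s k))) = (\<lambda>k. s k * cnj (x k))" by (simp add: mult.commute)
    ultimately show ?thesis by simp
  qed
  have h4: "((\<lambda>k. s k * cnj (s k)) has_sum (\<Sum>i<N. \<Sum>j<N. c i * cnj (c j) * (if i = j then 1 else 0))) UNIV"
  proof -
    have "((\<lambda>k. \<Sum>i<N. \<Sum>j<N. c i * cnj (c j) * (f i k * cnj (f j k))) has_sum
        (\<Sum>i<N. \<Sum>j<N. c i * cnj (c j) * (if i = j then 1 else 0))) UNIV"
      by (intro has_sum_finsum has_sum_cmult_right hq) auto
    moreover have "(\<lambda>k. \<Sum>i<N. \<Sum>j<N. c i * cnj (c j) * (f i k * cnj (f j k))) = (\<lambda>k. s k * cnj (s k))"
      by (auto simp: s_def sum_product mult_ac)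
    ultimately show ?thesis by simp
  qed
  have e4: "(\<Sum>i<N. \<Sum>j<N. c i * cnj (c j) * (if i = j then 1 else 0)) = (\<Sum>i<N. c i * cnj (c i))"
    by (simp add: if_distrib cong: if_cong)
  have sq: "(\<Sum>i<N. c i * cnj (c i)) = complex_of_real (\<Sum>i<N. (cmod (c i))^2)"
    unfolding of_real_sum by (simp only: complex_norm_square)
  have sq': "(\<Sum>i<N. cnj (c i) * c i) = complex_of_real (\<Sum>i<N. (cmod (c i))^2)"
    unfolding of_real_sum by (simp only: complex_norm_square mult.commute)
  have hall: "((\<lambda>k. x k * cnj (x k) - x k * cnj (s k) - s k * cnj (x k) + s k * cnj (s k)) has_sum
      (complex_of_real ((l2norm x)^2) - complex_of_real (\<Sum>i<N. (cmod (c i))^2)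
        - complex_of_real (\<Sum>i<N. (cmod (c i))^2) + complex_of_real (\<Sum>i<N. (cmod (c i))^2))) UNIV"
    using has_sum_add[OF has_sum_diff'[OF has_sum_diff'[OF h1 h2] h3] h4] by (simp only: sq sq' e4)
  have eq: "x k * cnj (x k) - x k * cnj (s k) - s k * cnj (x k) + s k * cnj (s k)
      = complex_of_real ((cmod (x k - s k))^2)" for k
    by (simp only: complex_norm_square) (simp add: algebra_simps)
  have "((\<lambda>k. (cmod (x k - s k))^2) has_sum ((l2norm x)^2 - (\<Sum>i<N. (cmod (c i))^2))) UNIV"
    using has_sum_Re[OF hall] by (simp add: eq)
  then have "0 \<le> (l2norm x)^2 - (\<Sum>i<N. (cmod (c i))^2)"
    by (rule has_sum_nonneg) auto
  then show ?thesis by (simp add: c_def)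
qed



lemma phase_0'[simp]: "phase \<theta> j 0 = 1"
  by (simp add: phase_def)

lemma infsum_single_UNIV: "infsum (\<lambda>j. if j = a then c else (0::'b::{comm_monoid_add,t2_space})) UNIV = c"
proof -
  have "infsum (\<lambda>j. if j = a then c else 0) UNIV = infsum (\<lambda>j. c) {a}"
    by (rule infsum_cong_neutral) auto
  then show ?thesis by simp
qed

lemma l2_basisv: "l2 (basisv k)"
  unfolding l2_def basisv_def
  by (rule finite_nonzero_values_imp_summable_on) (rule finite_subset[of _ "{k}"], auto)

lemma l2norm_basisv: "l2norm (basisv k) = 1"
proof -
  have "(\<lambda>j. (cmod (basisv k j))^2) = (\<lambda>j. if j = k then 1 else 0)"
    by (auto simp: basisv_def)
  then show ?thesis by (simp add: l2norm_def infsum_single_UNIV)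
qed

lemma smooth_abs_summable:
  fixes u :: "'n::finite coef"
  assumes "smooth_elem u"
  shows "(\<lambda>k. cmod (u k)) summable_on UNIV"
proof -
  obtain C where C: "\<And>k. (1 + norm (rvec k)) ^ (CARD('n) + 1) * cmod (u k) \<le> C"
    using assms unfolding smooth_elem_def by blast
  have ws: "(\<lambda>k::(int,'n) vec. (1 + norm (rvec k)) powr (- real (CARD('n) + 1))) summable_on UNIV"
    by (rule weight_summable) simp
  show ?thesis
  proof (rule summable_on_comparison_test[OF summable_on_cmult_right[OF ws, of C]])
    fix k :: "(int,'n) vec"
    have pos: "0 < (1 + norm (rvec k)) ^ (CARD('n) + 1)" by (simp add: add_pos_nonneg)
    have "cmod (u k) \<le> C / (1 + norm (rvec k)) ^ (CARD('n) + 1)"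
      using C[of k] pos by (simp add: field_simps)
    also have "\<dots> = C * (1 + norm (rvec k)) powr (- real (CARD('n) + 1))"
    proof -
      have "(1 + norm (rvec k)) powr (- real (CARD('n) + 1)) = inverse ((1 + norm (rvec k)) powr (real (CARD('n) + 1)))"
        by (rule powr_minus)
      also have "\<dots> = inverse ((1 + norm (rvec k)) ^ (CARD('n) + 1))"
        by (subst powr_realpow) (auto simp: add_pos_nonneg)
      finally show ?thesis by (simp add: divide_inverse)
    qed
    finally show "cmod (u k) \<le> C * (1 + norm (rvec k)) powr (- real (CARD('n) + 1))" .
  qed simp
qed

lemma smooth_bounded:
  assumes "smooth_elem u"
  shows "\<exists>B. \<forall>k. cmod (u k) \<le> B"
  using assms unfolding smooth_elem_def by (metis mult_1 power_0)

lemma smooth_l2: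
  fixes u :: "'n::finite coef"
  assumes "smooth_elem u"
  shows "l2 u"
proof -
  obtain B where B: "\<And>k. cmod (u k) \<le> B" using smooth_bounded[OF assms] by blast
  show ?thesis unfolding l2_def
  proof (rule summable_on_comparison_test[OF summable_on_cmult_right[OF smooth_abs_summable[OF assms], of B]])
    fix k
    show "(cmod (u k))^2 \<le> B * cmod (u k)"
      using B[of k] by (simp add: power2_eq_square mult_right_mono)
  qed simp
qed



lemma sum_translate_le:
  fixes v :: "'n::finite coef"
  assumes "l2 v" "finite L"
  shows "(\<Sum>l\<in>L. (cmod (v (l - j)))^2) \<le> (l2norm v)^2"
proof -
  have "(\<Sum>l\<in>L. (cmod (v (l - j)))^2) = (\<Sum>i\<in>(\<lambda>l. l - j) ` L. (cmod (v i))^2)"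
    by (subst sum.reindex) (auto simp: inj_on_def)
  also have "\<dots> \<le> (\<Sum>\<^sub>\<infinity>i. (cmod (v i))^2)"
    using assms by (intro finite_sum_le_infsum) (auto simp: l2_def)
  finally show ?thesis by (simp add: l2norm_sq)
qed

lemma tmult_bound:
  fixes u v :: "'n::{finite,linorder} coef"
  assumes su: "smooth_elem u" and v: "l2 v" and v1: "l2norm v \<le> 1"
  shows "l2norm (tmult \<theta> u v) \<le> infsum (\<lambda>k. cmod (u k)) UNIV"
proof -
  define a where "a j = cmod (u j)" for j
  define b where "b i = cmod (v i)" for i
  define A where "A = infsum a UNIV"
  have sa: "a summable_on UNIV" unfolding a_def by (rule smooth_abs_summable[OF su])
  have a0: "a j \<ge> 0" for j by (simp add: a_def)
  have A0: "A \<ge> 0" unfolding A_def using a0 by (simp add: infsum_nonneg)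
  have b0: "b i \<ge> 0" for i by (simp add: b_def)
  have b1: "b i \<le> 1" for i using l2_coord[OF v, of i] v1 by (simp add: b_def)
  have sab: "(\<lambda>j. a j * b (l - j)) summable_on UNIV" for l
    by (rule summable_on_comparison_test[OF sa]) (use a0 b0 b1 in \<open>auto intro: mult_left_le\<close>)
  have sab2: "(\<lambda>j. a j * (b (l - j))^2) summable_on UNIV" for l
    by (rule summable_on_comparison_test[OF sa]) (use a0 b0 b1 in \<open>auto intro!: mult_left_le simp: power_le_one\<close>)
  define D where "D l = infsum (\<lambda>j. a j * (b (l - j))^2) UNIV" for l
  have tl: "cmod (tmult \<theta> u v l) \<le> infsum (\<lambda>j. a j * b (l - j)) UNIV" for l
  proof -
    have "norm (infsum (\<lambda>j. u j * v (l - j) * phase \<theta> j (l - j)) UNIV)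
        \<le> infsum (\<lambda>j. norm (u j * v (l - j) * phase \<theta> j (l - j))) UNIV"
      by (rule norm_infsum_bound) (use sab[of l] in \<open>simp add: norm_mult a_def b_def\<close>)
    then show ?thesis by (simp add: tmult_def norm_mult a_def b_def)
  qed
  have cs: "(cmod (tmult \<theta> u v l))^2 \<le> A * D l" for l
  proof -
    have w: "(infsum (\<lambda>j. a j * \<bar>b (l - j)\<bar>) UNIV)^2 \<le> infsum a UNIV * infsum (\<lambda>j. a j * (b (l - j))^2) UNIV"
      by (rule weighted_cs(2)[OF a0 sa sab2])
    have "(cmod (tmult \<theta> u v l))^2 \<le> (infsum (\<lambda>j. a j * b (l - j)) UNIV)^2"
      using tl[of l] by (intro power_mono) auto
    also have "\<dots> \<le> A * D l" using w b0 by (simp add: A_def D_def)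
    finally show ?thesis .
  qed
  have fin: "(\<Sum>l\<in>L. (cmod (tmult \<theta> u v l))^2) \<le> A * A" if fL: "finite L" for L
  proof -
    have "(\<Sum>l\<in>L. (cmod (tmult \<theta> u v l))^2) \<le> (\<Sum>l\<in>L. A * D l)"
      by (intro sum_mono cs)
    also have "\<dots> = A * (\<Sum>l\<in>L. D l)" by (simp add: sum_distrib_left)
    also have "(\<Sum>l\<in>L. D l) = infsum (\<lambda>j. \<Sum>l\<in>L. a j * (b (l - j))^2) UNIV"
      unfolding D_def by (rule infsum_finsum(2)[symmetric]) (use fL sab2 in auto)
    also have "\<dots> \<le> infsum a UNIV"
    proof (rule infsum_mono)
      show "(\<lambda>j. \<Sum>l\<in>L. a j * (b (l - j))^2) summable_on UNIV"
        by (rule infsum_finsum(1)) (use fL sab2 in auto)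
      show "a summable_on UNIV" by (rule sa)
      fix j
      have "(\<Sum>l\<in>L. (b (l - j))^2) \<le> (l2norm v)^2"
        unfolding b_def by (rule sum_translate_le[OF v fL])
      also have "\<dots> \<le> 1" using v1 l2norm_nonneg[of v] by (simp add: power_le_one)
      finally have "(\<Sum>l\<in>L. (b (l - j))^2) \<le> 1" .
      then have "a j * (\<Sum>l\<in>L. (b (l - j))^2) \<le> a j" using a0[of j] by (simp add: mult_left_le)
      then show "(\<Sum>l\<in>L. a j * (b (l - j))^2) \<le> a j" by (simp add: sum_distrib_left)
    qed
    finally show ?thesis using A0 by (simp add: A_def mult_left_mono)
  qed
  have "infsum (\<lambda>l. (cmod (tmult \<theta> u v l))^2) UNIV \<le> A * A"
    by (rule nonneg_summable_bound(2)) (use fin in auto)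
  then have "l2norm (tmult \<theta> u v) \<le> sqrt (A * A)"
    unfolding l2norm_def by (rule real_sqrt_le_mono)
  also have "\<dots> = A" using A0 by simp
  finally show ?thesis unfolding A_def a_def[abs_def] .
qed

lemma tmult_basisv0: "tmult \<theta> u (basisv 0) = u"
proof
  fix l
  have "tmult \<theta> u (basisv 0) l = infsum (\<lambda>j. if j = l then u l else 0) UNIV"
    unfolding tmult_def by (rule infsum_cong) (auto simp: basisv_def)
  then show "tmult \<theta> u (basisv 0) l = u l" by (simp add: infsum_single_UNIV)
qed

lemma cnorm_ge:
  fixes u :: "'n::{finite,linorder} coef"
  assumes "smooth_elem u"
  shows "l2norm u \<le> cnorm \<theta> u"
proof -
  let ?S = "{l2norm (tmult \<theta> u v) | v. l2 v \<and> l2norm v \<le> 1}"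
  have bdd: "bdd_above ?S"
    by (rule bdd_aboveI[where M="infsum (\<lambda>k. cmod (u k)) UNIV"]) (use tmult_bound[OF assms] in auto)
  have "l2norm u \<in> ?S"
    using l2_basisv[of 0] l2norm_basisv[of 0] tmult_basisv0[of \<theta> u] by (metis (mono_tags, lifting) mem_Collect_eq order_refl)
  then show ?thesis unfolding cnorm_def by (rule cSup_upper[OF _ bdd])
qed



lemma translate_image: "(\<lambda>l::(int,'n::finite) vec. l - k) ` UNIV = UNIV"
  by (auto simp: image_def intro!: exI[of _ "_ + k"])

lemma l2_translate:
  fixes u :: "'n::finite coef"
  assumes "l2 u"
  shows "l2 (\<lambda>l. u (l - k))" "l2norm (\<lambda>l. u (l - k)) = l2norm u"
proof -
  have inj: "inj_on (\<lambda>l::(int,'n) vec. l - k) UNIV" by (auto simp: inj_on_def)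
  have "(\<lambda>j. (cmod (u j))^2) summable_on ((\<lambda>l. l - k) ` UNIV)" using assms translate_image[of k]
    by (simp add: l2_def)
  then show "l2 (\<lambda>l. u (l - k))" unfolding l2_def using summable_on_reindex[OF inj, of "\<lambda>j. (cmod (u j))^2"] by (simp add: o_def)
  have "infsum (\<lambda>j. (cmod (u j))^2) ((\<lambda>l. l - k) ` UNIV) = infsum (\<lambda>l. (cmod (u (l - k)))^2) UNIV"
    using infsum_reindex[OF inj] by (simp add: o_def)
  then show "l2norm (\<lambda>l. u (l - k)) = l2norm u" unfolding l2norm_def using translate_image[of k] by simp
qed

lemma l2_cs:
  fixes u v :: "'n::finite coef"
  assumes "l2 u" "l2 v"
  shows "infsum (\<lambda>k. cmod (u k) * cmod (v k)) UNIV \<le> l2norm u * l2norm v"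
proof (rule infsum_le_finite_sums[OF l2_abs_prod[OF assms]])
  fix F :: "(int,'n::finite) vec set" assume F: "finite F"
  have "(\<Sum>k\<in>F. cmod (u k) * cmod (v k)) = (\<Sum>k\<in>F. \<bar>cmod (u k)\<bar> * \<bar>cmod (v k)\<bar>)" by simp
  also have "\<dots> \<le> L2_set (\<lambda>k. cmod (u k)) F * L2_set (\<lambda>k. cmod (v k)) F" by (rule L2_set_mult_ineq)
  also have "\<dots> \<le> l2norm u * l2norm v"
  proof (intro mult_mono)
    show "L2_set (\<lambda>k. cmod (u k)) F \<le> l2norm u"
      unfolding L2_set_def l2norm_def using assms(1) F
      by (intro real_sqrt_le_mono finite_sum_le_infsum) (auto simp: l2_def)
    show "L2_set (\<lambda>k. cmod (v k)) F \<le> l2norm v"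
      unfolding L2_set_def l2norm_def using assms(2) F
      by (intro real_sqrt_le_mono finite_sum_le_infsum) (auto simp: l2_def)
  qed (auto simp: l2norm_nonneg L2_set_def intro: sum_nonneg)
  finally show "(\<Sum>k\<in>F. cmod (u k) * cmod (v k)) \<le> l2norm u * l2norm v" .
qed

lemma l2inner_le:
  assumes "l2 u" "l2 v"
  shows "cmod (l2inner u v) \<le> l2norm u * l2norm v"
proof -
  have "cmod (l2inner u v) \<le> infsum (\<lambda>k. norm (u k * cnj (v k))) UNIV"
    unfolding l2inner_def by (rule norm_infsum_bound) (use l2_abs_prod[OF assms] in \<open>simp add: norm_mult\<close>)
  also have "\<dots> = infsum (\<lambda>k. cmod (u k) * cmod (v k)) UNIV" by (simp add: norm_mult)
  also have "\<dots> \<le> l2norm u * l2norm v" by (rule l2_cs[OF assms])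
  finally show ?thesis .
qed

lemma orthonormal_norm:
  assumes "orthonormal_sys e N" "i < N"
  shows "l2 (e i)" "l2norm (e i) = 1"
proof -
  show l: "l2 (e i)" using assms by (simp add: orthonormal_sys_def)
  have "l2inner (e i) (e i) = 1" using assms by (simp add: orthonormal_sys_def)
  moreover have "l2inner (e i) (e i) = complex_of_real ((l2norm (e i))^2)"
    using l2_has_inner[OF l l] l2_has_norm[OF l] has_sum_unique by blast
  ultimately have "(l2norm (e i))^2 = 1" by (metis of_real_eq_1_iff)
  then show "l2norm (e i) = 1" using l2norm_nonneg[of "e i"] by (simp add: power2_eq_1_iff)
qed

lemma l2inner_basisv: "l2inner (basisv k) v = cnj (v k)"
proof -
  have "l2inner (basisv k) v = infsum (\<lambda>j. if j = k then cnj (v k) else 0) UNIV"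
    unfolding l2inner_def by (rule infsum_cong) (auto simp: basisv_def)
  then show ?thesis by (simp add: infsum_single_UNIV)
qed

lemma bessel_coord:
  assumes "orthonormal_sys e N"
  shows "(\<Sum>i<N. (cmod (e i k))^2) \<le> 1"
  using bessel[OF l2_basisv assms, of k] by (simp add: l2inner_basisv l2norm_basisv)



lemma l2_cmod_cong:
  assumes "\<And>l. cmod (u l) = cmod (v l)"
  shows "l2 u = l2 v" "l2norm u = l2norm v"
  using assms by (simp_all add: l2_def l2norm_def)

context
  fixes \<theta> :: "((real, 'n::{finite,linorder}) vec, 'n) vec" and \<rho> :: "(real,'n) vec \<Rightarrow> 'n coef"
  assumes l2r: "\<And>k. l2 (\<rho> (rvec k))"
    and sH: "(\<lambda>k. l2norm (\<rho> (rvec k))) summable_on UNIV"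
begin

lemma core_coord: "cmod (\<rho> (rvec k) (l - k)) \<le> l2norm (\<rho> (rvec k))"
  by (rule l2_coord[OF l2r])

lemma core_abs_summable:
  assumes "\<And>k. cmod (v k) \<le> V"
  shows "(\<lambda>k. cmod (v k) * cmod (\<rho> (rvec k) (l - k))) summable_on UNIV"
proof (rule summable_on_comparison_test[OF summable_on_cmult_right[OF sH, of V]])
  fix k
  show "cmod (v k) * cmod (\<rho> (rvec k) (l - k)) \<le> V * l2norm (\<rho> (rvec k))"
    by (intro mult_mono assms core_coord) (auto intro: order_trans[OF _ assms])
qed simp

lemma core_summable:
  assumes "\<And>k. cmod (v k) \<le> V"
  shows "(\<lambda>k. v k * \<rho> (rvec k) (l - k) * phase \<theta> (l - k) k) summable_on UNIV"
  by (rule abs_summable_summable) (use core_abs_summable[OF assms, where l=l] in \<open>simp add: norm_mult\<close>)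

lemma core_linear:
  assumes "l2 u" "l2 v"
  shows "psido \<theta> \<rho> (\<lambda>k. a * u k + b * v k) = (\<lambda>l. a * psido \<theta> \<rho> u l + b * psido \<theta> \<rho> v l)"
proof
  fix l
  have su: "(\<lambda>k. u k * \<rho> (rvec k) (l - k) * phase \<theta> (l - k) k) summable_on UNIV"
    by (rule core_summable) (rule l2_coord[OF assms(1)])
  have sv: "(\<lambda>k. v k * \<rho> (rvec k) (l - k) * phase \<theta> (l - k) k) summable_on UNIV"
    by (rule core_summable) (rule l2_coord[OF assms(2)])
  have "psido \<theta> \<rho> (\<lambda>k. a * u k + b * v k) l =
     infsum (\<lambda>k. a * (u k * \<rho> (rvec k) (l - k) * phase \<theta> (l - k) k) + b * (v k * \<rho> (rvec k) (l - k) * phase \<theta> (l - k) k)) UNIV"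
    unfolding psido_def by (rule infsum_cong) (simp add: algebra_simps)
  also have "\<dots> = a * psido \<theta> \<rho> u l + b * psido \<theta> \<rho> v l"
    unfolding psido_def
    by (subst infsum_add) (auto intro!: summable_on_cmult_right su sv simp: infsum_cmult_right')
  finally show "psido \<theta> \<rho> (\<lambda>k. a * u k + b * v k) l = a * psido \<theta> \<rho> u l + b * psido \<theta> \<rho> v l" .
qed

lemma core_l2:
  assumes v: "l2 v"
  shows "l2 (psido \<theta> \<rho> v)"
proof -
  define r where "r k l = cmod (\<rho> (rvec k) (l - k))" for k l
  define H where "H k = l2norm (\<rho> (rvec k))" for k
  define h where "h k = H k + (1 + norm (rvec k)) powr (- real (CARD('n) + 1))" for k
  define G where "G = infsum h UNIV"
  define V where "V = l2norm v"
  have H0: "H k \<ge> 0" for k by (simp add: H_def l2norm_nonneg)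
  have r0: "r k l \<ge> 0" for k l by (simp add: r_def)
  have rH: "r k l \<le> H k" for k l unfolding r_def H_def by (rule core_coord)
  have h0: "h k > 0" for k
  proof -
    have "1 + norm (rvec k) \<noteq> 0" using norm_ge_zero[of "rvec k"] by linarith
    then have "0 < (1 + norm (rvec k)) powr (- real (CARD('n) + 1))" by simp
    then show ?thesis using H0[of k] unfolding h_def by linarith
  qed
  have Hh: "H k \<le> h k" for k by (simp add: h_def)
  have sh: "h summable_on UNIV"
    unfolding h_def H_def by (intro summable_on_add sH weight_summable) simp
  have G0: "G \<ge> 0" unfolding G_def using h0 by (simp add: infsum_nonneg less_imp_le)
  have V0: "V \<ge> 0" by (simp add: V_def l2norm_nonneg)
  have sr: "(\<lambda>k. r k l) summable_on UNIV" for l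
    by (rule summable_on_comparison_test[OF sH]) (use rH r0 in \<open>auto simp: H_def\<close>)
  have rr_le: "(r k l)^2 / h k \<le> h k" for k l
  proof -
    have "(r k l)^2 \<le> (h k)^2" using rH[of k l] Hh[of k] r0[of k l] by (intro power_mono) auto
    then show ?thesis using h0[of k] by (simp add: divide_le_eq power2_eq_square)
  qed
  have srr: "(\<lambda>k. (r k l)^2 / h k) summable_on UNIV" for l
    by (rule summable_on_comparison_test[OF sh]) (use rr_le h0 in \<open>auto intro: divide_nonneg_pos\<close>)
  define E where "E l = infsum (\<lambda>k. (r k l)^2 / h k) UNIV" for l
  have pt: "(cmod (psido \<theta> \<rho> v l))^2 \<le> V^2 * (G * E l)" for l
  proof -
    have vb: "cmod (v k) \<le> V" for k unfolding V_def by (rule l2_coord[OF v])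
    have "cmod (psido \<theta> \<rho> v l) \<le> infsum (\<lambda>k. norm (v k * \<rho> (rvec k) (l - k) * phase \<theta> (l - k) k)) UNIV"
      unfolding psido_def by (rule norm_infsum_bound) (use core_abs_summable[OF vb, where l=l] in \<open>simp add: norm_mult\<close>)
    also have "\<dots> = infsum (\<lambda>k. cmod (v k) * r k l) UNIV" by (simp add: norm_mult r_def)
    also have "\<dots> \<le> infsum (\<lambda>k. V * r k l) UNIV"
      by (rule infsum_mono) (use core_abs_summable[OF vb, where l=l] sr in \<open>auto simp: r_def intro: summable_on_cmult_right mult_right_mono vb\<close>)
    also have "\<dots> = V * infsum (\<lambda>k. r k l) UNIV" by (simp add: infsum_cmult_right')
    finally have le1: "cmod (psido \<theta> \<rho> v l) \<le> V * infsum (\<lambda>k. r k l) UNIV" .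
    have wcs: "(infsum (\<lambda>k. h k * \<bar>r k l / h k\<bar>) UNIV)^2 \<le> infsum h UNIV * infsum (\<lambda>k. h k * (r k l / h k)^2) UNIV"
    proof (rule weighted_cs(2))
      show "\<And>j. 0 \<le> h j" using h0 by (simp add: less_imp_le)
      show "h summable_on UNIV" by (rule sh)
      have "(\<lambda>k. h k * (r k l / h k)^2) = (\<lambda>k. (r k l)^2 / h k)"
        using h0 by (auto simp: fun_eq_iff power2_eq_square field_simps)
      then show "(\<lambda>k. h k * (r k l / h k)^2) summable_on UNIV" using srr by simp
    qed
    have e1: "(\<lambda>k. h k * \<bar>r k l / h k\<bar>) = (\<lambda>k. r k l)"
      using h0 r0 by (auto simp: fun_eq_iff less_imp_le) (metis less_irrefl)
    have e2: "(\<lambda>k. h k * (r k l / h k)^2) = (\<lambda>k. (r k l)^2 / h k)"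
      using h0 by (auto simp: fun_eq_iff power2_eq_square field_simps)
    have c2: "(infsum (\<lambda>k. r k l) UNIV)^2 \<le> G * E l"
      using wcs unfolding e1 e2 G_def E_def .
    have "(cmod (psido \<theta> \<rho> v l))^2 \<le> (V * infsum (\<lambda>k. r k l) UNIV)^2"
      using le1 by (intro power_mono) auto
    also have "\<dots> = V^2 * (infsum (\<lambda>k. r k l) UNIV)^2" by (simp add: power_mult_distrib)
    also have "\<dots> \<le> V^2 * (G * E l)" using c2 by (intro mult_left_mono) auto
    finally show ?thesis .
  qed
  have fin: "(\<Sum>l\<in>L. (cmod (psido \<theta> \<rho> v l))^2) \<le> V^2 * (G * G)" if fL: "finite L" for L
  proof -
    have "(\<Sum>l\<in>L. (cmod (psido \<theta> \<rho> v l))^2) \<le> (\<Sum>l\<in>L. V^2 * (G * E l))"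
      by (intro sum_mono pt)
    also have "\<dots> = V^2 * (G * (\<Sum>l\<in>L. E l))" by (simp add: sum_distrib_left)
    also have "(\<Sum>l\<in>L. E l) = infsum (\<lambda>k. \<Sum>l\<in>L. (r k l)^2 / h k) UNIV"
      unfolding E_def by (rule infsum_finsum(2)[symmetric]) (use fL srr in auto)
    also have "\<dots> \<le> G"
      unfolding G_def
    proof (rule infsum_mono)
      show "(\<lambda>k. \<Sum>l\<in>L. (r k l)^2 / h k) summable_on UNIV"
        by (rule infsum_finsum(1)) (use fL srr in auto)
      show "h summable_on UNIV" by (rule sh)
      fix k
      have "(\<Sum>l\<in>L. (r k l)^2) \<le> (l2norm (\<rho> (rvec k)))^2"
        unfolding r_def by (rule sum_translate_le[OF l2r fL])
      also have "\<dots> \<le> (h k)^2" using Hh[of k] H0[of k] by (intro power_mono) (auto simp: H_def)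
      finally have "(\<Sum>l\<in>L. (r k l)^2) / h k \<le> h k"
        using h0[of k] by (simp add: divide_le_eq power2_eq_square)
      then show "(\<Sum>l\<in>L. (r k l)^2 / h k) \<le> h k" by (simp add: sum_divide_distrib)
    qed
    finally show ?thesis using G0 by (simp add: mult_left_mono)
  qed
  show ?thesis unfolding l2_def
    by (rule nonneg_summable_bound(1)) (use fin in auto)
qed

lemma core_w:
  "l2 (\<lambda>l. \<rho> (rvec k) (l - k) * phase \<theta> (l - k) k)"
  "l2norm (\<lambda>l. \<rho> (rvec k) (l - k) * phase \<theta> (l - k) k) = l2norm (\<rho> (rvec k))"
proof -
  have c: "cmod (\<rho> (rvec k) (l - k) * phase \<theta> (l - k) k) = cmod (\<rho> (rvec k) (l - k))" for l
    by (simp add: norm_mult)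
  show "l2 (\<lambda>l. \<rho> (rvec k) (l - k) * phase \<theta> (l - k) k)"
    using l2_cmod_cong(1)[of "\<lambda>l. \<rho> (rvec k) (l - k) * phase \<theta> (l - k) k" "\<lambda>l. \<rho> (rvec k) (l - k)"] c
      l2_translate(1)[OF l2r, of k k] by blast
  show "l2norm (\<lambda>l. \<rho> (rvec k) (l - k) * phase \<theta> (l - k) k) = l2norm (\<rho> (rvec k))"
    using l2_cmod_cong(2)[of "\<lambda>l. \<rho> (rvec k) (l - k) * phase \<theta> (l - k) k" "\<lambda>l. \<rho> (rvec k) (l - k)"] c
      l2_translate(2)[OF l2r, of k k] by simp
qed

lemma core_inner:
  assumes e: "l2 e" and f: "l2 f"
  shows "cmod (l2inner (psido \<theta> \<rho> e) f)
     \<le> infsum (\<lambda>k. cmod (e k) * cmod (l2inner (\<lambda>l. \<rho> (rvec k) (l - k) * phase \<theta> (l - k) k) f)) UNIV"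
proof -
  define w where "w k l = \<rho> (rvec k) (l - k) * phase \<theta> (l - k) k" for k l
  define Fn where "Fn = (\<lambda>(k, l). e k * w k l * cnj (f l))"
  define E where "E = l2norm e"
  define Fo where "Fo = l2norm f"
  have eb: "cmod (e k) \<le> E" for k unfolding E_def by (rule l2_coord[OF e])
  have E0: "E \<ge> 0" "Fo \<ge> 0" by (simp_all add: E_def Fo_def l2norm_nonneg)
  have wl2: "l2 (w k)" for k unfolding w_def[abs_def] by (rule core_w(1))
  have wn: "l2norm (w k) = l2norm (\<rho> (rvec k))" for k unfolding w_def[abs_def] by (rule core_w(2))
  have inner_b: "cmod (l2inner (w k) f) \<le> l2norm (\<rho> (rvec k)) * Fo" for k
    using l2inner_le[OF wl2 f] by (simp add: wn Fo_def)
  have row: "(\<lambda>l. norm (Fn (k, l))) summable_on UNIV" for k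
  proof -
    have "(\<lambda>l. cmod (e k) * (cmod (w k l) * cmod (f l))) summable_on UNIV"
      by (intro summable_on_cmult_right l2_abs_prod wl2 f)
    then show ?thesis by (simp add: Fn_def norm_mult mult_ac)
  qed
  have rowval: "infsum (\<lambda>l. norm (Fn (k, l))) UNIV \<le> E * (l2norm (\<rho> (rvec k)) * Fo)" for k
  proof -
    have "infsum (\<lambda>l. norm (Fn (k, l))) UNIV = cmod (e k) * infsum (\<lambda>l. cmod (w k l) * cmod (f l)) UNIV"
      by (simp add: Fn_def norm_mult mult_ac infsum_cmult_right')
    also have "\<dots> \<le> E * (l2norm (\<rho> (rvec k)) * Fo)"
      using l2_cs[OF wl2 f] eb[of k] E0 by (intro mult_mono) (auto simp: wn Fo_def intro: infsum_nonneg)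
    finally show ?thesis .
  qed
  have col: "(\<lambda>k. norm (infsum (\<lambda>l. norm (Fn (k, l))) UNIV)) summable_on UNIV"
  proof -
    have "(\<lambda>k. infsum (\<lambda>l. norm (Fn (k, l))) UNIV) summable_on UNIV"
    proof (rule summable_on_comparison_test)
      show "(\<lambda>k. E * (l2norm (\<rho> (rvec k)) * Fo)) summable_on UNIV"
        by (intro summable_on_cmult_right summable_on_cmult_left sH)
    qed (use rowval in \<open>auto intro: infsum_nonneg\<close>)
    then show ?thesis by (simp add: infsum_nonneg)
  qed
  have "(\<lambda>x. norm (Fn x)) summable_on (Sigma UNIV (\<lambda>_. UNIV))"
    by (rule Infinite_Sum.abs_summable_on_Sigma_iff[THEN iffD2]) (use row col in blast)
  then have "Fn summable_on (UNIV \<times> UNIV)" by (rule abs_summable_summable)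
  then have sF: "(\<lambda>(k, l). e k * w k l * cnj (f l)) summable_on (UNIV \<times> UNIV)"
    unfolding Fn_def .
  have "l2inner (psido \<theta> \<rho> e) f = infsum (\<lambda>l. infsum (\<lambda>k. e k * w k l) UNIV * cnj (f l)) UNIV"
    unfolding l2inner_def psido_def w_def by (simp add: mult.assoc)
  also have "\<dots> = infsum (\<lambda>l. infsum (\<lambda>k. e k * w k l * cnj (f l)) UNIV) UNIV"
    by (simp add: infsum_cmult_left')
  also have "\<dots> = infsum (\<lambda>k. infsum (\<lambda>l. e k * w k l * cnj (f l)) UNIV) UNIV"
    using infsum_swap_banach[OF sF] by simp
  also have "\<dots> = infsum (\<lambda>k. e k * l2inner (w k) f) UNIV"
    unfolding l2inner_def by (simp add: mult.assoc infsum_cmult_right')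
  finally have eq: "l2inner (psido \<theta> \<rho> e) f = infsum (\<lambda>k. e k * l2inner (w k) f) UNIV" .
  have "cmod (infsum (\<lambda>k. e k * l2inner (w k) f) UNIV) \<le> infsum (\<lambda>k. norm (e k * l2inner (w k) f)) UNIV"
  proof (rule norm_infsum_bound)
    show "(\<lambda>k. norm (e k * l2inner (w k) f)) summable_on UNIV"
    proof (rule summable_on_comparison_test)
      show "(\<lambda>k. E * (l2norm (\<rho> (rvec k)) * Fo)) summable_on UNIV"
        by (intro summable_on_cmult_right summable_on_cmult_left sH)
      fix k
      show "norm (e k * l2inner (w k) f) \<le> E * (l2norm (\<rho> (rvec k)) * Fo)"
        unfolding norm_mult using eb inner_b E0 by (intro mult_mono) auto
    qed simp
  qed
  then show ?thesis using eq by (simp add: norm_mult w_def[abs_def])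
qed

lemma core_trace:
  assumes e: "orthonormal_sys e N" and f: "orthonormal_sys f N"
  shows "(\<Sum>i<N. cmod (l2inner (psido \<theta> \<rho> (e i)) (f i))) \<le> infsum (\<lambda>k. l2norm (\<rho> (rvec k))) UNIV"
proof -
  define w where "w k = (\<lambda>l. \<rho> (rvec k) (l - k) * phase \<theta> (l - k) k)" for k
  define a where "a i k = cmod (e i k) * cmod (l2inner (w k) (f i))" for i k
  have wl2: "l2 (w k)" for k unfolding w_def by (rule core_w(1))
  have wn: "l2norm (w k) = l2norm (\<rho> (rvec k))" for k unfolding w_def by (rule core_w(2))
  have el2: "l2 (e i)" "l2norm (e i) = 1" if "i < N" for i using orthonormal_norm[OF e that] by auto
  have fl2: "l2 (f i)" "l2norm (f i) = 1" if "i < N" for i using orthonormal_norm[OF f that] by auto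
  have sa: "a i summable_on UNIV" if i: "i < N" for i
  proof (rule summable_on_comparison_test[OF sH])
    fix k
    have "cmod (e i k) \<le> 1" using l2_coord[OF el2(1)[OF i], of k] el2(2)[OF i] by simp
    moreover have "cmod (l2inner (w k) (f i)) \<le> l2norm (\<rho> (rvec k))"
      using l2inner_le[OF wl2 fl2(1)[OF i]] fl2(2)[OF i] wn by simp
    ultimately show "a i k \<le> l2norm (\<rho> (rvec k))" unfolding a_def
      using mult_mono[of "cmod (e i k)" 1 "cmod (l2inner (w k) (f i))" "l2norm (\<rho> (rvec k))"] by simp
    show "0 \<le> a i k" by (simp add: a_def)
  qed
  have "(\<Sum>i<N. cmod (l2inner (psido \<theta> \<rho> (e i)) (f i))) \<le> (\<Sum>i<N. infsum (a i) UNIV)"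
  proof (rule sum_mono)
    fix i assume "i \<in> {..<N}"
    then have i: "i < N" by simp
    show "cmod (l2inner (psido \<theta> \<rho> (e i)) (f i)) \<le> infsum (a i) UNIV"
      unfolding a_def w_def by (rule core_inner[OF el2(1)[OF i] fl2(1)[OF i]])
  qed
  also have "\<dots> = infsum (\<lambda>k. \<Sum>i<N. a i k) UNIV"
    by (rule infsum_finsum(2)[symmetric]) (use sa in auto)
  also have "\<dots> \<le> infsum (\<lambda>k. l2norm (\<rho> (rvec k))) UNIV"
  proof (rule infsum_mono)
    show "(\<lambda>k. \<Sum>i<N. a i k) summable_on UNIV" by (rule infsum_finsum(1)) (use sa in auto)
    show "(\<lambda>k. l2norm (\<rho> (rvec k))) summable_on UNIV" by (rule sH)
    fix k
    have "(\<Sum>i<N. a i k) = (\<Sum>i\<in>{..<N}. \<bar>cmod (e i k)\<bar> * \<bar>cmod (l2inner (w k) (f i))\<bar>)"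
      by (simp add: a_def)
    also have "\<dots> \<le> L2_set (\<lambda>i. cmod (e i k)) {..<N} * L2_set (\<lambda>i. cmod (l2inner (w k) (f i))) {..<N}"
      by (rule L2_set_mult_ineq)
    also have "\<dots> \<le> 1 * l2norm (\<rho> (rvec k))"
    proof (rule mult_mono)
      show "L2_set (\<lambda>i. cmod (e i k)) {..<N} \<le> 1"
        unfolding L2_set_def using bessel_coord[OF e, of k] by simp
      have "L2_set (\<lambda>i. cmod (l2inner (w k) (f i))) {..<N} \<le> sqrt ((l2norm (w k))^2)"
        unfolding L2_set_def by (rule real_sqrt_le_mono) (rule bessel[OF wl2 f])
      then show "L2_set (\<lambda>i. cmod (l2inner (w k) (f i))) {..<N} \<le> l2norm (\<rho> (rvec k))"
        using l2norm_nonneg[of "w k"] wn by simp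
    qed (auto simp: l2norm_nonneg L2_set_def intro: sum_nonneg)
    finally show "(\<Sum>i<N. a i k) \<le> l2norm (\<rho> (rvec k))" by simp
  qed
  finally show ?thesis .
qed

lemma core_trace_class: "trace_class (psido \<theta> \<rho>)"
  and core_trace_norm: "trace_norm (psido \<theta> \<rho>) \<le> infsum (\<lambda>k. l2norm (\<rho> (rvec k))) UNIV"
proof -
  have ub: "x \<le> infsum (\<lambda>k. l2norm (\<rho> (rvec k))) UNIV" if "x \<in> trace_sums (psido \<theta> \<rho>)" for x
    using that core_trace unfolding trace_sums_def by auto
  have ne: "trace_sums (psido \<theta> \<rho>) \<noteq> {}"
  proof -
    have o: "orthonormal_sys ((\<lambda>_. \<lambda>_. 0) :: nat \<Rightarrow> 'n coef) 0" by (simp add: orthonormal_sys_def)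
    have "(\<Sum>i<(0::nat). cmod (l2inner (psido \<theta> \<rho> ((\<lambda>_. \<lambda>_. 0) i)) ((\<lambda>_. \<lambda>_. 0) i))) \<in> trace_sums (psido \<theta> \<rho>)"
      unfolding trace_sums_def using o by (intro CollectI exI[of _ "0::nat"] exI[of _ "(\<lambda>_. \<lambda>_. 0) :: nat \<Rightarrow> 'n coef"]) simp
    then show ?thesis by blast
  qed
  show "trace_class (psido \<theta> \<rho>)"
    unfolding trace_class_def l2_linear_def
    using core_l2 core_linear bdd_aboveI[of "trace_sums (psido \<theta> \<rho>)", OF ub] by auto
  show "trace_norm (psido \<theta> \<rho>) \<le> infsum (\<lambda>k. l2norm (\<rho> (rvec k))) UNIV"
    unfolding trace_norm_def by (rule cSup_least[OF ne ub])
qed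

end



lemma mdelta_0[simp]: "mdelta (\<lambda>_. 0) u = u"
  by (simp add: mdelta_def)

lemma symbol_props:
  assumes "\<rho> \<in> symbol_class \<theta> m"
  shows "\<And>\<xi>. smooth_elem (\<rho> \<xi>)"
    "\<exists>C. \<forall>\<xi>. cnorm \<theta> (\<rho> \<xi>) \<le> C * (1 + norm \<xi>) powr m"
    "sderiv \<theta> \<rho> (\<lambda>_. 0) = \<rho>"
proof -
  obtain D where D: "deriv_family \<theta> \<rho> D"
    and B: "\<And>\<alpha> \<beta>. \<exists>C. \<forall>\<xi>. cnorm \<theta> (mdelta \<alpha> (D \<beta> \<xi>)) \<le> C * (1 + norm \<xi>) powr (m - real (sum \<beta> UNIV))"
    using assms unfolding symbol_class_def by blast
  have D0: "D (\<lambda>_. 0) = \<rho>" using D by (simp add: deriv_family_def)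
  show "smooth_elem (\<rho> \<xi>)" for \<xi> using D D0 unfolding deriv_family_def by metis
  show "\<exists>C. \<forall>\<xi>. cnorm \<theta> (\<rho> \<xi>) \<le> C * (1 + norm \<xi>) powr m"
    using B[of "\<lambda>_. 0" "\<lambda>_. 0"] by (simp add: D0)
  have "deriv_family \<theta> \<rho> (sderiv \<theta> \<rho>)"
    unfolding sderiv_def by (rule someI[of "deriv_family \<theta> \<rho>", OF D])
  then show "sderiv \<theta> \<rho> (\<lambda>_. 0) = \<rho>" by (simp add: deriv_family_def)
qed

lemma symbol_core:
  fixes \<theta> :: "((real, 'n::{finite,linorder}) vec, 'n) vec"
  assumes r: "\<rho> \<in> symbol_class \<theta> m" and m: "m < - real CARD('n)"
  shows "\<And>k. l2 (\<rho> (rvec k))" "(\<lambda>k. l2norm (\<rho> (rvec k))) summable_on UNIV"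
proof -
  show l: "l2 (\<rho> (rvec k))" for k by (rule smooth_l2[OF symbol_props(1)[OF r]])
  obtain C where C: "\<And>\<xi>. cnorm \<theta> (\<rho> \<xi>) \<le> C * (1 + norm \<xi>) powr m"
    using symbol_props(2)[OF r] by blast
  show "(\<lambda>k. l2norm (\<rho> (rvec k))) summable_on UNIV"
  proof (rule summable_on_comparison_test[OF summable_on_cmult_right[OF weight_summable[OF m], of C]])
    fix k :: "(int,'n) vec"
    show "l2norm (\<rho> (rvec k)) \<le> C * (1 + norm (rvec k)) powr m"
      using cnorm_ge[OF symbol_props(1)[OF r], of "rvec k" \<theta>] C[of "rvec k"] by linarith
  qed (simp add: l2norm_nonneg)
qed

lemma psido_basisv: "psido \<theta> \<rho> (basisv k) k = \<rho> (rvec k) 0"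
proof -
  have "psido \<theta> \<rho> (basisv k) k = infsum (\<lambda>j. if j = k then \<rho> (rvec k) 0 else 0) UNIV"
    unfolding psido_def by (rule infsum_cong) (auto simp: basisv_def)
  then show ?thesis by (simp add: infsum_single_UNIV)
qed

lemma l2inner_basisv_right: "l2inner u (basisv k) = u k"
proof -
  have "l2inner u (basisv k) = infsum (\<lambda>j. if j = k then u k else 0) UNIV"
    unfolding l2inner_def by (rule infsum_cong) (auto simp: basisv_def)
  then show ?thesis by (simp add: infsum_single_UNIV)
qed

theorem proposition13p13:
  fixes \<theta> :: "((real, 'n::{finite,linorder}) vec, 'n) vec" and m :: real
  assumes "CARD('n) \<ge> 2"
    and "\<forall>j k. \<theta>$j$k = - \<theta>$k$j"
    and "m < - real CARD('n)"
  shows "(\<forall>\<rho>\<in>symbol_class \<theta> m. trace_class (psido \<theta> \<rho>))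
     \<and> (\<forall>\<rho>\<in>symbol_class \<theta> m. \<forall>\<sigma>\<in>symbol_class \<theta> m. \<forall>a b v. l2 v \<longrightarrow>
          psido \<theta> (\<lambda>\<xi> k. a * \<rho> \<xi> k + b * \<sigma> \<xi> k) v
            = (\<lambda>l. a * psido \<theta> \<rho> v l + b * psido \<theta> \<sigma> v l))
     \<and> (\<exists>F C. finite F \<and> (\<forall>\<rho>\<in>symbol_class \<theta> m.
          trace_norm (psido \<theta> \<rho>) \<le> C * (\<Sum>(\<alpha>, \<beta>)\<in>F. sym_seminorm \<theta> m \<alpha> \<beta> \<rho>)))
     \<and> (\<forall>\<rho>\<in>symbol_class \<theta> m.
          ((\<lambda>k. tau (\<rho> (rvec k))) has_sum op_trace (psido \<theta> \<rho>)) UNIV)"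
proof (intro conjI ballI allI impI)
  have m: "m < - real CARD('n)" by (rule assms(3))
  fix \<rho> assume r: "\<rho> \<in> symbol_class \<theta> m"
  show "trace_class (psido \<theta> \<rho>)"
    by (rule core_trace_class[OF symbol_core[OF r m]])
next
  have m: "m < - real CARD('n)" by (rule assms(3))
  fix \<rho> \<sigma> a b and v :: "'n coef" assume r: "\<rho> \<in> symbol_class \<theta> m" and s: "\<sigma> \<in> symbol_class \<theta> m" and v: "l2 v"
  show "psido \<theta> (\<lambda>\<xi> k. a * \<rho> \<xi> k + b * \<sigma> \<xi> k) v = (\<lambda>l. a * psido \<theta> \<rho> v l + b * psido \<theta> \<sigma> v l)"
  proof
    fix l
    have vb: "cmod (v k) \<le> l2norm v" for k by (rule l2_coord[OF v])
    have s1: "(\<lambda>k. v k * \<rho> (rvec k) (l - k) * phase \<theta> (l - k) k) summable_on UNIV"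
      by (rule core_summable[OF symbol_core[OF r m] vb])
    have s2: "(\<lambda>k. v k * \<sigma> (rvec k) (l - k) * phase \<theta> (l - k) k) summable_on UNIV"
      by (rule core_summable[OF symbol_core[OF s m] vb])
    have "psido \<theta> (\<lambda>\<xi> k. a * \<rho> \<xi> k + b * \<sigma> \<xi> k) v l =
       infsum (\<lambda>k. a * (v k * \<rho> (rvec k) (l - k) * phase \<theta> (l - k) k) + b * (v k * \<sigma> (rvec k) (l - k) * phase \<theta> (l - k) k)) UNIV"
      unfolding psido_def by (rule infsum_cong) (simp add: algebra_simps)
    also have "\<dots> = a * psido \<theta> \<rho> v l + b * psido \<theta> \<sigma> v l"
      unfolding psido_def
      by (subst infsum_add) (auto intro!: summable_on_cmult_right s1 s2 simp: infsum_cmult_right')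
    finally show "psido \<theta> (\<lambda>\<xi> k. a * \<rho> \<xi> k + b * \<sigma> \<xi> k) v l = a * psido \<theta> \<rho> v l + b * psido \<theta> \<sigma> v l" .
  qed
next
  have m: "m < - real CARD('n)" by (rule assms(3))
  define g where "g k = (1 + norm (rvec k)) powr m" for k :: "(int,'n) vec"
  have sg: "g summable_on UNIV" unfolding g_def by (rule weight_summable[OF m])
  show "\<exists>F C. finite F \<and> (\<forall>\<rho>\<in>symbol_class \<theta> m.
          trace_norm (psido \<theta> \<rho>) \<le> C * (\<Sum>(\<alpha>, \<beta>)\<in>F. sym_seminorm \<theta> m \<alpha> \<beta> \<rho>))"
  proof (intro exI[of _ "{((\<lambda>_. 0), (\<lambda>_. 0))}"] exI[of _ "infsum g UNIV"] conjI ballI)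
    show "finite {((\<lambda>_. 0::nat), (\<lambda>_. 0::nat))}" by simp
    fix \<rho> assume r: "\<rho> \<in> symbol_class \<theta> m"
    define s where "s = sym_seminorm \<theta> m (\<lambda>_. 0) (\<lambda>_. 0) \<rho>"
    have sd: "s = (SUP \<xi>. cnorm \<theta> (\<rho> \<xi>) / (1 + norm \<xi>) powr m)"
      unfolding s_def sym_seminorm_def by (simp add: symbol_props(3)[OF r])
    obtain C where C: "\<And>\<xi>. cnorm \<theta> (\<rho> \<xi>) \<le> C * (1 + norm \<xi>) powr m"
      using symbol_props(2)[OF r] by blast
    have pp: "(1 + norm \<xi>) powr m > 0" for \<xi> :: "(real,'n) vec"
    proof -
      have "1 + norm \<xi> \<noteq> 0" using norm_ge_zero[of \<xi>] by linarith
      then show ?thesis by simp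
    qed
    have bdd: "bdd_above (range (\<lambda>\<xi>. cnorm \<theta> (\<rho> \<xi>) / (1 + norm \<xi>) powr m))"
    proof (rule bdd_aboveI2)
      fix \<xi> :: "(real,'n) vec"
      show "cnorm \<theta> (\<rho> \<xi>) / (1 + norm \<xi>) powr m \<le> C"
        using C[of \<xi>] pp[of \<xi>] by (simp add: divide_le_eq)
    qed
    have bound: "l2norm (\<rho> (rvec k)) \<le> s * g k" for k
    proof -
      have "cnorm \<theta> (\<rho> (rvec k)) / (1 + norm (rvec k)) powr m \<le> s"
        unfolding sd by (rule cSUP_upper[OF _ bdd]) simp
      then have "cnorm \<theta> (\<rho> (rvec k)) \<le> s * g k"
        using pp[of "rvec k"] by (simp add: divide_le_eq g_def)
      then show ?thesis using cnorm_ge[OF symbol_props(1)[OF r], of "rvec k" \<theta>] by linarith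
    qed
    have "trace_norm (psido \<theta> \<rho>) \<le> infsum (\<lambda>k. l2norm (\<rho> (rvec k))) UNIV"
      by (rule core_trace_norm[OF symbol_core[OF r m]])
    also have "\<dots> \<le> infsum (\<lambda>k. s * g k) UNIV"
      by (rule infsum_mono[OF symbol_core(2)[OF r m] summable_on_cmult_right[OF sg] bound])
    also have "\<dots> = infsum g UNIV * s" by (simp add: infsum_cmult_right' mult.commute)
    finally show "trace_norm (psido \<theta> \<rho>) \<le> infsum g UNIV * (\<Sum>(\<alpha>, \<beta>)\<in>{((\<lambda>_. 0), (\<lambda>_. 0))}. sym_seminorm \<theta> m \<alpha> \<beta> \<rho>)"
      by (simp add: s_def)
  qed
next
  have m: "m < - real CARD('n)" by (rule assms(3))
  fix \<rho> assume r: "\<rho> \<in> symbol_class \<theta> m"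
  have eq: "(\<lambda>k. l2inner (psido \<theta> \<rho> (basisv k)) (basisv k)) = (\<lambda>k. tau (\<rho> (rvec k)))"
    by (simp add: l2inner_basisv_right psido_basisv tau_def)
  have sm: "(\<lambda>k. tau (\<rho> (rvec k))) summable_on UNIV"
  proof (rule abs_summable_summable)
    show "(\<lambda>k. norm (tau (\<rho> (rvec k)))) summable_on UNIV"
    proof (rule summable_on_comparison_test[OF symbol_core(2)[OF r m]])
      fix k show "norm (tau (\<rho> (rvec k))) \<le> l2norm (\<rho> (rvec k))"
        unfolding tau_def by (rule l2_coord[OF symbol_core(1)[OF r m]])
    qed simp
  qed
  show "((\<lambda>k. tau (\<rho> (rvec k))) has_sum op_trace (psido \<theta> \<rho>)) UNIV"
    unfolding op_trace_def eq using sm by (simp add: has_sum_infsum)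
qed


end
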